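(* Every tree $T$ with at least two vertices contains a vertex $r$ such that the components $B_1,\dots,B_m$ of $T-r$ can be partitioned into two classes $\mathcal{C}_1$ and $\mathcal{C}_2$ such that for both $j\in\{1,2\}$, $$\sum_{B_i\in\mathcal{C}_j}|V(B_i)\cap \mathrm{Even}_T(r)| + \sum_{B_i\notin\mathcal{C}_j}|V(B_i)\cap\mathrm{Odd}_T(r)| \le \left(\frac23-\frac{1}{3\Delta(T)}\right)|T|+\frac12.$$
   Context: For a vertex $v$ of a tree $T$, $\mathrm{Even}_T(v)$ is the set of vertices at even distance from $v$ in $T$, excluding $v$ itself, and $\mathrm{Odd}_T(v)$ is the set of vertices at odd distance from $v$. $|T|$ is the number of vertices and $\Delta(T)$ the maximum degree. *)

theory Defs
  imports Complex_Main
begin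

definition simple_graph :: "'a set \<Rightarrow> ('a \<Rightarrow> 'a \<Rightarrow> bool) \<Rightarrow> bool" where
  "simple_graph V E \<longleftrightarrow> finite V \<and> (\<forall>u v. E u v \<longrightarrow> u \<in> V \<and> v \<in> V)
     \<and> (\<forall>u v. E u v \<longrightarrow> E v u) \<and> (\<forall>v. \<not> E v v)"

definition reach_in :: "'a set \<Rightarrow> ('a \<Rightarrow> 'a \<Rightarrow> bool) \<Rightarrow> 'a \<Rightarrow> 'a \<Rightarrow> bool" where
  "reach_in S E u v \<longleftrightarrow> u \<in> S \<and> v \<in> S \<and> (\<lambda>x y. E x y \<and> x \<in> S \<and> y \<in> S)\<^sup>*\<^sup>* u v"

definition connected_graph :: "'a set \<Rightarrow> ('a \<Rightarrow> 'a \<Rightarrow> bool) \<Rightarrow> bool" where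
  "connected_graph V E \<longleftrightarrow> V \<noteq> {} \<and> (\<forall>u\<in>V. \<forall>v\<in>V. reach_in V E u v)"

definition is_cycle :: "('a \<Rightarrow> 'a \<Rightarrow> bool) \<Rightarrow> 'a list \<Rightarrow> bool" where
  "is_cycle E xs \<longleftrightarrow> length xs \<ge> 3 \<and> distinct xs
     \<and> (\<forall>i. Suc i < length xs \<longrightarrow> E (xs ! i) (xs ! Suc i)) \<and> E (last xs) (hd xs)"

definition is_tree :: "'a set \<Rightarrow> ('a \<Rightarrow> 'a \<Rightarrow> bool) \<Rightarrow> bool" where
  "is_tree V E \<longleftrightarrow> simple_graph V E \<and> connected_graph V E \<and> (\<nexists>xs. is_cycle E xs)"

definition gdist :: "('a \<Rightarrow> 'a \<Rightarrow> bool) \<Rightarrow> 'a \<Rightarrow> 'a \<Rightarrow> nat" where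
  "gdist E u v = (LEAST n. (E ^^ n) u v)"

definition Even_T :: "'a set \<Rightarrow> ('a \<Rightarrow> 'a \<Rightarrow> bool) \<Rightarrow> 'a \<Rightarrow> 'a set" where
  "Even_T V E v = {u \<in> V. u \<noteq> v \<and> even (gdist E v u)}"

definition Odd_T :: "'a set \<Rightarrow> ('a \<Rightarrow> 'a \<Rightarrow> bool) \<Rightarrow> 'a \<Rightarrow> 'a set" where
  "Odd_T V E v = {u \<in> V. odd (gdist E v u)}"

definition degree :: "'a set \<Rightarrow> ('a \<Rightarrow> 'a \<Rightarrow> bool) \<Rightarrow> 'a \<Rightarrow> nat" where
  "degree V E v = card {u \<in> V. E v u}"

definition max_degree :: "'a set \<Rightarrow> ('a \<Rightarrow> 'a \<Rightarrow> bool) \<Rightarrow> nat" where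
  "max_degree V E = Max (degree V E ` V)"

definition components_minus :: "'a set \<Rightarrow> ('a \<Rightarrow> 'a \<Rightarrow> bool) \<Rightarrow> 'a \<Rightarrow> 'a set set" where
  "components_minus V E r = (\<lambda>x. {y. reach_in (V - {r}) E x y}) ` (V - {r})"

end

theory Submission
  imports Defs
begin

lemma balG:
  fixes t :: "'b \<Rightarrow> real"
  assumes "finite S" "\<forall>i\<in>S. 0 \<le> t i \<and> t i \<le> K"
  shows "\<exists>G\<subseteq>S. \<bar>s + sum t G - sum t (S - G)\<bar> \<le> max K (\<bar>s\<bar> - sum t S)"
  using assms
proof (induction S arbitrary: s rule: finite_induct)
  case empty then show ?case by auto
next
  case (insert x F)
  have tx: "0 \<le> t x" "t x \<le> K" using insert.prems by auto
  have F0: "0 \<le> sum t F" using insert.prems by (intro sum_nonneg) auto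
  define s' where "s' = (if s \<ge> 0 then s - t x else s + t x)"
  obtain G where G: "G \<subseteq> F" "\<bar>s' + sum t G - sum t (F - G)\<bar> \<le> max K (\<bar>s'\<bar> - sum t F)"
    using insert.IH[of s'] insert.prems by auto
  define G' where "G' = (if s \<ge> 0 then G else insert x G)"
  have xG: "x \<notin> G" using G insert.hyps by blast
  have fG: "finite G" using G insert.hyps finite_subset by blast
  have e1: "s + sum t G' - sum t (insert x F - G') = s' + sum t G - sum t (F - G)"
  proof (cases "s \<ge> 0")
    case True
    then have "insert x F - G' = insert x (F - G)" using G'_def xG by auto
    then show ?thesis using True insert.hyps by (simp add: G'_def s'_def)
  next
    case False
    then have "insert x F - G' = F - G" using G'_def xG insert.hyps by auto
    then show ?thesis using False fG xG by (simp add: G'_def s'_def)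
  qed
  have e2: "max K (\<bar>s'\<bar> - sum t F) \<le> max K (\<bar>s\<bar> - sum t (insert x F))"
    using insert.hyps tx F0 by (auto simp: s'_def)
  have "G' \<subseteq> insert x F" using G by (auto simp: G'_def)
  then show ?case using e1 e2 G(2) by (intro exI[of _ G']) auto
qed

lemma balH:
  fixes t :: "'b \<Rightarrow> real"
  assumes fin: "finite I" and nn: "\<forall>i\<in>I. 0 \<le> t i" and K: "0 \<le> K"
    and nd: "\<forall>j\<in>I. t j \<le> K + sum t (I - {j})"
    and three: "\<forall>i\<in>I. \<forall>j\<in>I. \<forall>k\<in>I. i \<noteq> j \<and> j \<noteq> k \<and> i \<noteq> k \<longrightarrow> t i \<le> K \<or> t j \<le> K \<or> t k \<le> K"
  shows "\<exists>G\<subseteq>I. \<bar>sum t G - sum t (I - G)\<bar> \<le> K"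
proof -
  define Big where "Big = {i\<in>I. t i > K}"
  have c: "Big = {} \<or> (\<exists>a. Big = {a}) \<or> (\<exists>a b. a \<noteq> b \<and> a \<in> Big \<and> b \<in> Big)" by blast
  moreover {
    assume "Big = {}"
    then have sm0: "\<forall>i\<in>I. 0 \<le> t i \<and> t i \<le> K" using nn by (auto simp: Big_def not_less)
    then obtain G where "G \<subseteq> I" "\<bar>0 + sum t G - sum t (I - G)\<bar> \<le> max K (\<bar>0\<bar> - sum t I)"
      using balG[OF fin sm0, of 0] by (elim exE conjE) (erule (1) that)
    moreover have "0 \<le> sum t I" using nn by (intro sum_nonneg) auto
    ultimately have ?thesis using K by (intro exI[of _ G]) (auto simp: max_def split: if_splits)
  } moreover {
    fix a assume a: "Big = {a}"
    have aI: "a \<in> I" using a by (auto simp: Big_def)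
    have sm1: "\<forall>i\<in>I - {a}. 0 \<le> t i \<and> t i \<le> K" using nn a by (auto simp: Big_def not_less)
    have fin1: "finite (I - {a})" using fin by simp
    obtain G where G: "G \<subseteq> I - {a}" "\<bar>t a + sum t G - sum t (I - {a} - G)\<bar> \<le> max K (\<bar>t a\<bar> - sum t (I - {a}))"
      using balG[OF fin1 sm1, of "t a"] by (elim exE conjE) (erule (1) that)
    have b1: "\<bar>t a\<bar> - sum t (I - {a}) \<le> K" using nd aI nn by auto
    have e1: "sum t (insert a G) = t a + sum t G" using G fin finite_subset by (subst sum.insert) auto
    have e2: "I - insert a G = I - {a} - G" by auto
    have "\<bar>sum t (insert a G) - sum t (I - insert a G)\<bar> \<le> K"
      unfolding e1 e2 using G(2) b1 K by linarith
    moreover have "insert a G \<subseteq> I" using G aI by blast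
    ultimately have ?thesis by blast
  } moreover {
    fix a b assume ab: "a \<noteq> b" "a \<in> Big" "b \<in> Big"
    have abI: "a \<in> I" "b \<in> I" "t a > K" "t b > K" using ab by (auto simp: Big_def)
    have sm: "\<forall>i\<in>I - {a, b}. 0 \<le> t i \<and> t i \<le> K"
    proof
      fix i assume i: "i \<in> I - {a, b}"
      have iI: "i \<in> I" "i \<noteq> a" "i \<noteq> b" using i by auto
      have "t a \<le> K \<or> t b \<le> K \<or> t i \<le> K" using three abI(1,2) iI(1) ab(1) iI(2,3) by metis
      then have "t i \<le> K" using abI by linarith
      then show "0 \<le> t i \<and> t i \<le> K" using nn i by auto
    qed
    have fin2: "finite (I - {a, b})" using fin by simp
    obtain G where G: "G \<subseteq> I - {a, b}"
      "\<bar>(t a - t b) + sum t G - sum t (I - {a, b} - G)\<bar> \<le> max K (\<bar>t a - t b\<bar> - sum t (I - {a, b}))"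
      using balG[OF fin2 sm, of "t a - t b"] by (elim exE conjE) (erule (1) that)
    have fG: "finite G" using G fin finite_subset by blast
    have s1: "sum t (I - {a}) = t b + sum t (I - {a, b})"
    proof -
      have X: "I - {a} = insert b (I - {a, b})" using abI ab(1) by auto
      show ?thesis by (simp only: X) (rule sum.insert, use fin in auto)
    qed
    have s2: "sum t (I - {b}) = t a + sum t (I - {a, b})"
    proof -
      have X: "I - {b} = insert a (I - {a, b})" using abI ab(1) by auto
      show ?thesis by (simp only: X) (rule sum.insert, use fin in auto)
    qed
    have b2: "\<bar>t a - t b\<bar> - sum t (I - {a, b}) \<le> K"
    proof -
      have "t a \<le> K + sum t (I - {a})" "t b \<le> K + sum t (I - {b})" using nd abI(1,2) by auto
      then have "t a - t b - sum t (I - {a, b}) \<le> K" "t b - t a - sum t (I - {a, b}) \<le> K"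
        using s1 s2 nn abI by linarith+
      then show ?thesis by (cases "t a - t b \<ge> 0") auto
    qed
    have e1: "sum t (insert a G) = t a + sum t G" using G fG by (subst sum.insert) auto
    have e2: "I - insert a G = insert b (I - {a, b} - G)" using G abI ab(1) by auto
    have e3: "sum t (insert b (I - {a, b} - G)) = t b + sum t (I - {a, b} - G)" using fin by (subst sum.insert) auto
    have "\<bar>sum t (insert a G) - sum t (I - insert a G)\<bar> \<le> K"
      unfolding e1 e2 e3 using G(2) b2 K by linarith
    moreover have "insert a G \<subseteq> I" using G abI by blast
    ultimately have ?thesis by blast
  }
  ultimately show ?thesis by blast
qed

locale tr =
  fixes V :: "'a set" and E :: "'a \<Rightarrow> 'a \<Rightarrow> bool"
  assumes tree: "is_tree V E"
begin

lemma finV: "finite V" using tree by (simp add: is_tree_def simple_graph_def)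
lemma edgeV: "E u v \<Longrightarrow> u \<in> V \<and> v \<in> V" using tree by (simp add: is_tree_def simple_graph_def)
lemma esym: "E u v \<Longrightarrow> E v u" using tree by (simp add: is_tree_def simple_graph_def)
lemma eirr: "\<not> E v v" using tree by (simp add: is_tree_def simple_graph_def)
lemma conn: "u \<in> V \<Longrightarrow> v \<in> V \<Longrightarrow> reach_in V E u v" using tree by (simp add: is_tree_def connected_graph_def)
lemma nocyc: "\<not> is_cycle E xs" using tree by (simp add: is_tree_def)

definition R :: "'a set \<Rightarrow> 'a \<Rightarrow> 'a \<Rightarrow> bool" where "R S x y \<longleftrightarrow> E x y \<and> x \<in> S \<and> y \<in> S"

lemma R_eq: "(\<lambda>x y. E x y \<and> x \<in> S \<and> y \<in> S) = R S"
  by (intro ext) (simp add: R_def)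
lemma reach_R: "reach_in S E x y \<longleftrightarrow> x \<in> S \<and> y \<in> S \<and> (R S)\<^sup>*\<^sup>* x y"
  by (simp add: reach_in_def R_eq)

lemma Rsym_star: "(R S)\<^sup>*\<^sup>* x y \<Longrightarrow> (R S)\<^sup>*\<^sup>* y x"
proof (induction rule: rtranclp_induct)
  case base then show ?case by simp
next
  case (step y z)
  then have "R S z y" using esym by (auto simp: R_def)
  then show ?case using step by (meson converse_rtranclp_into_rtranclp)
qed

lemma reach_sym: "reach_in S E x y \<Longrightarrow> reach_in S E y x"
  using Rsym_star by (auto simp: reach_R)
lemma reach_trans: "reach_in S E x y \<Longrightarrow> reach_in S E y z \<Longrightarrow> reach_in S E x z"
  by (auto simp: reach_R)
lemma reach_refl: "x \<in> S \<Longrightarrow> reach_in S E x x"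
  by (auto simp: reach_R)
lemma reach_step: "reach_in S E x y \<Longrightarrow> E y z \<Longrightarrow> z \<in> S \<Longrightarrow> reach_in S E x z"
  by (auto simp: reach_R R_def intro: rtranclp.rtrancl_into_rtrancl)
lemma reach_edge: "E y z \<Longrightarrow> y \<in> S \<Longrightarrow> z \<in> S \<Longrightarrow> reach_in S E y z"
  using reach_refl reach_step by blast
lemma reach_in_S: "reach_in S E x y \<Longrightarrow> x \<in> S \<and> y \<in> S" by (simp add: reach_in_def)

definition cls :: "'a set \<Rightarrow> 'a \<Rightarrow> 'a set" where "cls S x = {y. reach_in S E x y}"

lemma cls_sub: "cls S x \<subseteq> S" using reach_in_S by (auto simp: cls_def)
lemma cls_self: "x \<in> S \<Longrightarrow> x \<in> cls S x" using reach_refl by (auto simp: cls_def)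
lemma cls_eq: "y \<in> cls S x \<Longrightarrow> cls S y = cls S x"
  unfolding cls_def using reach_sym reach_trans by blast
lemma cls_disj: "cls S x \<noteq> cls S y \<Longrightarrow> cls S x \<inter> cls S y = {}"
  using cls_eq by blast
lemma cls_step: "y \<in> cls S x \<Longrightarrow> E y z \<Longrightarrow> z \<in> S \<Longrightarrow> z \<in> cls S x"
  unfolding cls_def using reach_step by blast

lemma comps_def': "components_minus V E r = cls (V - {r}) ` (V - {r})"
  by (simp add: components_minus_def cls_def)

lemma walk_star: "E\<^sup>*\<^sup>* x y \<Longrightarrow> x \<in> V \<Longrightarrow> (R V)\<^sup>*\<^sup>* x y"
proof (induction rule: rtranclp_induct)
  case base then show ?case by simp
next
  case (step y z) then show ?case using edgeV by (auto simp: R_def intro: rtranclp.rtrancl_into_rtrancl)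
qed

lemma conn_star: "u \<in> V \<Longrightarrow> v \<in> V \<Longrightarrow> E\<^sup>*\<^sup>* u v"
proof -
  assume "u \<in> V" "v \<in> V"
  then have "(R V)\<^sup>*\<^sup>* u v" using conn reach_R by blast
  moreover have "R V \<le> E" by (auto simp: R_def)
  ultimately show ?thesis using rtranclp_mono by blast
qed

lemma conn_pow: "u \<in> V \<Longrightarrow> v \<in> V \<Longrightarrow> \<exists>n. (E ^^ n) u v"
  using conn_star rtranclp_imp_relpowp by metis


lemma gd_walk: "r \<in> V \<Longrightarrow> x \<in> V \<Longrightarrow> (E ^^ gdist E r x) r x"
  unfolding gdist_def using conn_pow by (metis LeastI_ex)
lemma gd_le: "(E ^^ n) r x \<Longrightarrow> gdist E r x \<le> n"
  unfolding gdist_def by (rule Least_le)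
lemma gd_self: "gdist E r r = 0"
  using gd_le[of 0 r r] by (simp add: relpowp_0_I)
lemma gd0: "r \<in> V \<Longrightarrow> x \<in> V \<Longrightarrow> gdist E r x = 0 \<Longrightarrow> x = r"
  using gd_walk[of r x] by (metis relpowp_0_E)
lemma gd_edge: "r \<in> V \<Longrightarrow> E p y \<Longrightarrow> gdist E r y \<le> Suc (gdist E r p)"
  using gd_walk[of r p] edgeV[of p y] by (metis gd_le relpowp_Suc_I)
lemma gd_pred: "r \<in> V \<Longrightarrow> y \<in> V \<Longrightarrow> gdist E r y = Suc k \<Longrightarrow> \<exists>p. E p y \<and> gdist E r p = k"
proof -
  assume a: "r \<in> V" "y \<in> V" "gdist E r y = Suc k"
  then have "(E ^^ Suc k) r y" using gd_walk by metis
  then obtain p where p: "(E ^^ k) r p" "E p y" by (metis relpowp_Suc_E)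
  have "gdist E r p \<le> k" using p gd_le by blast
  moreover have "Suc k \<le> Suc (gdist E r p)" using gd_edge[OF a(1) p(2)] a(3) by simp
  ultimately show ?thesis using p by auto
qed

lemma star_path:
  "P\<^sup>*\<^sup>* a b \<Longrightarrow> \<exists>xs. xs \<noteq> [] \<and> hd xs = a \<and> last xs = b \<and> distinct xs \<and>
     (\<forall>i. Suc i < length xs \<longrightarrow> P (xs!i) (xs!Suc i))"
proof (induction rule: rtranclp_induct)
  case base
  then show ?case by (intro exI[of _ "[a]"]) simp
next
  case (step y z)
  then obtain xs where xs: "xs \<noteq> []" "hd xs = a" "last xs = y" "distinct xs"
     "\<forall>i. Suc i < length xs \<longrightarrow> P (xs!i) (xs!Suc i)" by (elim exE conjE) simp
  show ?case
  proof (cases "z \<in> set xs")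
    case True
    then obtain i where i: "i < length xs" "xs!i = z" by (metis in_set_conv_nth)
    define ys where "ys = take (Suc i) xs"
    have ly: "length ys = Suc i" using i by (simp add: ys_def)
    have y1: "ys \<noteq> []" using xs(1) by (simp add: ys_def)
    have y2: "hd ys = a" using xs(1,2) by (simp add: hd_take ys_def)
    have y3: "last ys = z" using i ly y1 by (simp add: last_conv_nth ys_def)
    have y4: "distinct ys" using xs(4) by (simp add: ys_def)
    have y5: "\<forall>j. Suc j < length ys \<longrightarrow> P (ys!j) (ys!Suc j)"
    proof (intro allI impI)
      fix j assume "Suc j < length ys"
      then have "Suc j < Suc i" using ly by simp
      then show "P (ys!j) (ys!Suc j)" using xs(5) i by (simp add: ys_def)
    qed
    show ?thesis by (rule exI[of _ ys]) (use y1 y2 y3 y4 y5 in simp)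
  next
    case False
    define ys where "ys = xs @ [z]"
    have y2: "hd ys = a" using xs by (simp add: ys_def)
    have y4: "distinct ys" using xs False by (simp add: ys_def)
    have y5: "\<forall>j. Suc j < length ys \<longrightarrow> P (ys!j) (ys!Suc j)"
    proof (intro allI impI)
      fix j assume j: "Suc j < length ys"
      show "P (ys!j) (ys!Suc j)"
      proof (cases "Suc j < length xs")
        case True then show ?thesis using xs(5) by (simp add: nth_append ys_def)
      next
        case False
        then have jj: "j = length xs - 1" using j by (simp add: ys_def)
        have "xs ! (length xs - 1) = y" using xs(1,3) by (simp add: last_conv_nth)
        then have "ys ! j = y" "ys ! Suc j = z" using jj xs(1) by (simp_all add: nth_append ys_def)
        then show ?thesis using step(2) by simp
      qed
    qed
    show ?thesis by (rule exI[of _ ys]) (use y2 y4 y5 in \<open>simp add: ys_def\<close>)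
  qed
qed

lemma T1_disj:
  assumes ru: "E r u" and x1: "x \<in> cls (V - {r}) u" and x2: "x \<in> cls (V - {u}) r"
  shows False
proof -
  define P where "P = (\<lambda>a b. E a b \<and> \<not> ((a = r \<and> b = u) \<or> (a = u \<and> b = r)))"
  have "(R (V - {u}))\<^sup>*\<^sup>* r x" using x2 by (simp add: cls_def reach_R)
  moreover have "R (V - {u}) \<le> P" by (auto simp: R_def P_def)
  ultimately have 1: "P\<^sup>*\<^sup>* r x" using rtranclp_mono by blast
  have "reach_in (V - {r}) E x u" using x1 reach_sym by (simp add: cls_def)
  then have "(R (V - {r}))\<^sup>*\<^sup>* x u" by (simp add: reach_R)
  moreover have "R (V - {r}) \<le> P" by (auto simp: R_def P_def)
  ultimately have 2: "P\<^sup>*\<^sup>* x u" using rtranclp_mono by blast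
  from 1 2 have "P\<^sup>*\<^sup>* r u" by simp
  then obtain xs where xs: "xs \<noteq> []" "hd xs = r" "last xs = u" "distinct xs"
     "\<forall>i. Suc i < length xs \<longrightarrow> P (xs!i) (xs!Suc i)" using star_path by metis
  have ru': "r \<noteq> u" using ru eirr by blast
  have l1: "length xs \<noteq> 1"
  proof
    assume "length xs = 1"
    then obtain z where "xs = [z]" by (cases xs) auto
    then show False using xs(2,3) ru' by simp
  qed
  have l2: "length xs \<noteq> 2"
  proof
    assume "length xs = 2"
    then have "xs!0 = r" "xs!1 = u" using xs by (auto simp: hd_conv_nth last_conv_nth)
    then show False using xs(5) \<open>length xs = 2\<close> by (auto simp: P_def)
  qed
  have "length xs \<noteq> 0" using xs(1) by simp
  then have "length xs \<ge> 3" using l1 l2 by linarith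
  moreover have "\<forall>i. Suc i < length xs \<longrightarrow> E (xs!i) (xs!Suc i)" using xs(5) by (auto simp: P_def)
  moreover have "E (last xs) (hd xs)" using xs ru esym by simp
  ultimately have "is_cycle E xs" using xs(4) by (simp add: is_cycle_def)
  then show False using nocyc by blast
qed

lemma T1_un:
  assumes ru: "E r u" and x: "x \<in> V"
  shows "x \<in> cls (V - {r}) u \<or> x \<in> cls (V - {u}) r"
proof -
  have rV: "r \<in> V" and uV: "u \<in> V" using edgeV ru by auto
  have ru': "r \<noteq> u" using ru eirr by blast
  have "E\<^sup>*\<^sup>* r x" using conn_star rV x by blast
  then show ?thesis
  proof (induction rule: rtranclp_induct)
    case base
    show ?case using cls_self[of r "V - {u}"] rV ru' by simp
  next
    case (step y z)
    have zV: "z \<in> V" using edgeV step(2) by blast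
    from step(3) show ?case
    proof
      assume y: "y \<in> cls (V - {r}) u"
      show ?thesis
      proof (cases "z = r")
        case True
        then show ?thesis using cls_self[of r "V - {u}"] rV ru' by simp
      next
        case False
        then have "z \<in> V - {r}" using zV by simp
        then show ?thesis using cls_step[OF y step(2)] by simp
      qed
    next
      assume y: "y \<in> cls (V - {u}) r"
      show ?thesis
      proof (cases "z = u")
        case True
        then show ?thesis using cls_self[of u "V - {r}"] uV ru' by simp
      next
        case False
        then have "z \<in> V - {u}" using zV by simp
        then show ?thesis using cls_step[OF y step(2)] by simp
      qed
    qed
  qed
qed

lemma through:
  assumes ru: "E r u"
  shows "(E ^^ k) u x \<Longrightarrow> x \<notin> cls (V - {r}) u \<Longrightarrow> \<exists>j. Suc j \<le> k \<and> (E ^^ j) r x"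
proof (induction k arbitrary: x)
  case 0
  then have "x = u" by (metis relpowp_0_E)
  moreover have "u \<in> V - {r}" using edgeV[OF ru] eirr ru by auto
  then have "u \<in> cls (V - {r}) u" by (rule cls_self)
  ultimately show ?case using 0 by blast
next
  case (Suc k)
  then obtain y where y: "(E ^^ k) u y" "E y x" by (metis relpowp_Suc_E)
  show ?case
  proof (cases "y \<in> cls (V - {r}) u")
    case True
    have "x = r"
    proof (rule ccontr)
      assume "x \<noteq> r"
      then have "x \<in> V - {r}" using edgeV[OF y(2)] by simp
      then show False using cls_step[OF True y(2)] Suc.prems(2) by simp
    qed
    then show ?thesis by (intro exI[of _ 0]) (simp add: relpowp_0_I)
  next
    case False
    then obtain j where "Suc j \<le> k" "(E ^^ j) r y" using Suc.IH y(1) by blast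
    then show ?thesis using y(2) by (intro exI[of _ "Suc j"]) (auto intro: relpowp_Suc_I)
  qed
qed

lemma dist_R:
  assumes ru: "E r u" and x: "x \<in> cls (V - {u}) r"
  shows "gdist E u x = Suc (gdist E r x)"
proof -
  have rV: "r \<in> V" and uV: "u \<in> V" using edgeV ru by auto
  have xV: "x \<in> V" using x cls_sub by blast
  have nx: "x \<notin> cls (V - {r}) u" using T1_disj[OF ru _ x] by metis
  obtain j where j: "Suc j \<le> gdist E u x" "(E ^^ j) r x" using through[OF ru gd_walk[OF uV xV] nx] by (elim exE conjE) (erule (1) that)
  have "gdist E r x \<le> j" using gd_le[OF j(2)] .
  moreover have "gdist E u x \<le> Suc (gdist E r x)"
    using gd_le[OF relpowp_Suc_I2[OF esym[OF ru] gd_walk[OF rV xV]]] .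
  ultimately show ?thesis using j by simp
qed

lemma par_flip:
  assumes ru: "E r u" and x: "x \<in> V"
  shows "odd (gdist E u x) \<longleftrightarrow> even (gdist E r x)"
  using T1_un[OF ru x] dist_R[OF ru] dist_R[OF esym[OF ru]] by auto


abbreviation "comps r \<equiv> components_minus V E r"
abbreviation "Ev r \<equiv> Even_T V E r"
abbreviation "Od r \<equiv> Odd_T V E r"
definition "Nb r = {u \<in> V. E r u}"
abbreviation "Dl \<equiv> max_degree V E"

lemma comps_fin: "finite (comps r)" using finV by (simp add: comps_def')
lemma comps_sub: "B \<in> comps r \<Longrightarrow> B \<subseteq> V - {r}" unfolding comps_def' using cls_sub by blast
lemma comps_disj: "B1 \<in> comps r \<Longrightarrow> B2 \<in> comps r \<Longrightarrow> B1 \<noteq> B2 \<Longrightarrow> B1 \<inter> B2 = {}"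
  unfolding comps_def' using cls_disj by blast
lemma comps_Un: "\<Union> (comps r) = V - {r}"
proof
  show "\<Union> (comps r) \<subseteq> V - {r}" using comps_sub by blast
  show "V - {r} \<subseteq> \<Union> (comps r)"
  proof
    fix x assume x: "x \<in> V - {r}"
    then have "x \<in> cls (V - {r}) x" by (rule cls_self)
    moreover have "cls (V - {r}) x \<in> comps r" using x by (simp add: comps_def')
    ultimately show "x \<in> \<Union> (comps r)" by blast
  qed
qed
lemma comps_finB: "B \<in> comps r \<Longrightarrow> finite B" using comps_sub[of B r] finV by (meson finite_Diff finite_subset)

lemma sum_comps:
  assumes S: "S \<subseteq> V - {r}"
  shows "(\<Sum>B\<in>comps r. card (B \<inter> S)) = card S"
proof -
  have "card (\<Union>B\<in>comps r. B \<inter> S) = (\<Sum>B\<in>comps r. card (B \<inter> S))"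
  proof (rule card_UN_disjoint)
    show "finite (comps r)" by (rule comps_fin)
    show "\<forall>i\<in>comps r. finite (i \<inter> S)" using comps_finB by simp
    show "\<forall>i\<in>comps r. \<forall>j\<in>comps r. i \<noteq> j \<longrightarrow> i \<inter> S \<inter> (j \<inter> S) = {}"
      using comps_disj by blast
  qed
  moreover have "(\<Union>B\<in>comps r. B \<inter> S) = (\<Union> (comps r)) \<inter> S" by blast
  moreover have "(\<Union> (comps r)) \<inter> S = S" unfolding comps_Un using S by blast
  ultimately show ?thesis by simp
qed

lemma Ev_sub: "Ev r \<subseteq> V - {r}" by (auto simp: Even_T_def)
lemma Od_sub: "Od r \<subseteq> V - {r}" using gd_self by (auto simp: Odd_T_def)

lemma card_split:
  assumes "B \<subseteq> V - {r}"
  shows "card B = card (B \<inter> Ev r) + card (B \<inter> Od r)"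
proof -
  have "B = (B \<inter> Ev r) \<union> (B \<inter> Od r)" using assms by (auto simp: Even_T_def Odd_T_def)
  moreover have "finite B" using assms finV finite_subset by blast
  moreover have "(B \<inter> Ev r) \<inter> (B \<inter> Od r) = {}" by (auto simp: Even_T_def Odd_T_def)
  ultimately show ?thesis by (metis card_Un_disjoint finite_Int)
qed

lemma deg_le: "v \<in> V \<Longrightarrow> degree V E v \<le> Dl"
  unfolding max_degree_def using finV by simp

lemma comp_closed:
  assumes "B \<in> comps r" "y \<in> B" "E p y" "p \<noteq> r"
  shows "p \<in> B"
proof -
  obtain x where x: "B = cls (V - {r}) x" using assms(1) by (auto simp: comps_def')
  have "p \<in> V - {r}" using edgeV[OF assms(3)] assms(4) by simp
  then show ?thesis using cls_step[of y "V - {r}" x p] assms(2,3) esym x by simp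
qed

lemma comp_nbr:
  assumes rV: "r \<in> V" and B: "B \<in> comps r"
  shows "\<exists>u\<in>B. E r u"
proof -
  obtain x where x: "x \<in> V - {r}" "B = cls (V - {r}) x" using B by (auto simp: comps_def')
  have "E\<^sup>*\<^sup>* r x" using conn_star rV x by blast
  then have "x \<noteq> r \<Longrightarrow> \<exists>u. E r u \<and> x \<in> cls (V - {r}) u"
  proof (induction rule: rtranclp_induct)
    case base then show ?case by simp
  next
    case (step y z)
    have zV: "z \<in> V" using edgeV step(2) by blast
    show ?case
    proof (cases "y = r")
      case True
      have "z \<in> V - {r}" using zV step(4) by simp
      then have "z \<in> cls (V - {r}) z" by (rule cls_self)
      then show ?thesis using step(2) True by blast
    next
      case False
      then obtain u where u: "E r u" "y \<in> cls (V - {r}) u" using step(3) by blast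
      have "z \<in> V - {r}" using zV step(4) by simp
      then have "z \<in> cls (V - {r}) u" using cls_step[OF u(2) step(2)] by simp
      then show ?thesis using u(1) by blast
    qed
  qed
  then obtain u where u: "E r u" "x \<in> cls (V - {r}) u" using x by blast
  have "u \<in> V - {r}" using edgeV[OF u(1)] eirr u(1) by auto
  then have "u \<in> cls (V - {r}) u" by (rule cls_self)
  then have "u \<in> B" using x(2) cls_eq[OF u(2)] by simp
  then show ?thesis using u by blast
qed

definition "Succ r p = {y \<in> V. E p y \<and> gdist E r y = Suc (gdist E r p)}"

lemma succ_card:
  assumes rV: "r \<in> V" and pV: "p \<in> V" and pr: "p \<noteq> r"
  shows "card (Succ r p) \<le> Dl - 1"
proof -
  obtain k where k: "gdist E r p = Suc k" using gd0 rV pV pr by (metis not0_implies_Suc)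
  obtain q where q: "E q p" "gdist E r q = k" using gd_pred[OF rV pV k] by blast
  have qV: "q \<in> V" using edgeV q by blast
  have "Succ r p \<subseteq> {y \<in> V. E p y} - {q}" using k q by (auto simp: Succ_def)
  then have "card (Succ r p) \<le> card ({y \<in> V. E p y} - {q})"
    using finV by (intro card_mono) auto
  also have "\<dots> = degree V E p - 1" unfolding degree_def using q qV esym finV by (subst card_Diff_singleton) auto
  also have "\<dots> \<le> Dl - 1" using deg_le[OF pV] by simp
  finally show ?thesis .
qed

lemma count_i:
  assumes rV: "r \<in> V" and BV: "B \<subseteq> V - {r}" and cl: "\<And>y p. y \<in> B \<Longrightarrow> E p y \<Longrightarrow> p \<noteq> r \<Longrightarrow> p \<in> B"
  shows "card (B \<inter> Ev r) \<le> (Dl - 1) * card (B \<inter> Od r)"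
proof -
  have "B \<inter> Ev r \<subseteq> (\<Union>p\<in>B \<inter> Od r. Succ r p)"
  proof
    fix y assume y: "y \<in> B \<inter> Ev r"
    then have yV: "y \<in> V" "y \<noteq> r" "even (gdist E r y)" by (auto simp: Even_T_def)
    obtain k where k: "gdist E r y = Suc k" using gd0 rV yV by (metis not0_implies_Suc)
    obtain p where p: "E p y" "gdist E r p = k" using gd_pred[OF rV yV(1) k] by blast
    have "p \<noteq> r" using p k yV(3) gd_self by auto
    then have "p \<in> B" using cl y p by blast
    moreover have "p \<in> Od r" using p k yV(3) edgeV by (auto simp: Odd_T_def)
    moreover have "y \<in> Succ r p" using yV p k by (auto simp: Succ_def)
    ultimately show "y \<in> (\<Union>p\<in>B \<inter> Od r. Succ r p)" by blast
  qed
  then have "card (B \<inter> Ev r) \<le> card (\<Union>p\<in>B \<inter> Od r. Succ r p)"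
    by (intro card_mono finite_subset[OF _ finV]) (auto simp: Succ_def)
  also have "\<dots> \<le> (\<Sum>p\<in>B \<inter> Od r. card (Succ r p))"
    using BV finV finite_subset by (intro card_UN_le) blast
  also have "\<dots> \<le> (\<Sum>p\<in>B \<inter> Od r. Dl - 1)"
    using succ_card rV BV by (intro sum_mono) auto
  finally show ?thesis by (simp add: mult.commute)
qed

lemma count_ii:
  assumes rV: "r \<in> V" and BV: "B \<subseteq> V - {r}" and cl: "\<And>y p. y \<in> B \<Longrightarrow> E p y \<Longrightarrow> p \<noteq> r \<Longrightarrow> p \<in> B"
  shows "card (B \<inter> Od r) \<le> card (B \<inter> Nb r) + (Dl - 1) * card (B \<inter> Ev r)"
proof -
  have "B \<inter> Od r \<subseteq> (B \<inter> Nb r) \<union> (\<Union>p\<in>B \<inter> Ev r. Succ r p)"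
  proof
    fix y assume y: "y \<in> B \<inter> Od r"
    then have yV: "y \<in> V" "y \<noteq> r" "odd (gdist E r y)" using BV by (auto simp: Odd_T_def)
    obtain k where k: "gdist E r y = Suc k" using gd0 rV yV by (metis not0_implies_Suc)
    obtain p where p: "E p y" "gdist E r p = k" using gd_pred[OF rV yV(1) k] by blast
    show "y \<in> (B \<inter> Nb r) \<union> (\<Union>p\<in>B \<inter> Ev r. Succ r p)"
    proof (cases "p = r")
      case True then show ?thesis using y p yV by (auto simp: Nb_def)
    next
      case False
      then have "p \<in> B" using cl y p by blast
      moreover have "p \<in> Ev r" using p k yV(3) edgeV False by (auto simp: Even_T_def)
      moreover have "y \<in> Succ r p" using yV p k by (auto simp: Succ_def)
      ultimately show ?thesis by blast
    qed
  qed
  then have "card (B \<inter> Od r) \<le> card ((B \<inter> Nb r) \<union> (\<Union>p\<in>B \<inter> Ev r. Succ r p))"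
    using BV by (intro card_mono finite_subset[OF _ finV]) (auto simp: Succ_def Nb_def)
  also have "\<dots> \<le> card (B \<inter> Nb r) + card (\<Union>p\<in>B \<inter> Ev r. Succ r p)" by (rule card_Un_le)
  also have "card (\<Union>p\<in>B \<inter> Ev r. Succ r p) \<le> (\<Sum>p\<in>B \<inter> Ev r. card (Succ r p))"
    using BV finV finite_subset by (intro card_UN_le) blast
  also have "\<dots> \<le> (\<Sum>p\<in>B \<inter> Ev r. Dl - 1)"
    using succ_card rV BV by (intro sum_mono) auto
  finally show ?thesis by (simp add: mult.commute)
qed


end

context tr begin
definition "ev r B = real (card (B \<inter> Ev r))"
definition "od r B = real (card (B \<inter> Od r))"
definition "tt r B = \<bar>ev r B - od r B\<bar>"
definition "gam = real (card V) / 3 - 2 * real (card V) / (3 * real Dl) + 2"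

lemma nb_card: "card (Nb r) \<le> degree V E r" by (simp add: Nb_def degree_def)

lemma two_elems:
  assumes "card V \<ge> 2" "r \<in> V"
  shows "\<exists>x\<in>V. x \<noteq> r"
proof (rule ccontr)
  assume "\<not> ?thesis"
  then have "V \<subseteq> {r}" by blast
  then have "card V \<le> 1" using card_mono[of "{r}" V] by simp
  then show False using assms by simp
qed

lemma has_nbr:
  assumes "card V \<ge> 2" "r \<in> V"
  shows "\<exists>u. E r u"
proof -
  obtain x where x: "x \<in> V" "x \<noteq> r" using two_elems assms by blast
  then have "cls (V - {r}) x \<in> comps r" by (simp add: comps_def')
  then show ?thesis using comp_nbr[OF assms(2)] by blast
qed

lemma dl_pos:
  assumes "card V \<ge> 2"
  shows "Dl \<ge> 1"
proof -
  have "V \<noteq> {}" using assms by auto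
  then obtain r where r: "r \<in> V" by blast
  obtain u where u: "E r u" using has_nbr assms r by blast
  have "u \<in> Nb r" using u edgeV by (simp add: Nb_def)
  moreover have "finite (Nb r)" using finV by (simp add: Nb_def)
  ultimately have "card (Nb r) \<ge> 1" by (metis card_0_eq empty_iff less_one not_le)
  then show ?thesis using nb_card[of r] deg_le[OF r] by simp
qed

lemma closedV: "y \<in> V - {r} \<Longrightarrow> E p y \<Longrightarrow> p \<noteq> r \<Longrightarrow> p \<in> V - {r}"
  using edgeV by simp

lemma cardV_split:
  assumes "r \<in> V"
  shows "real (card V) = 1 + real (card (Ev r)) + real (card (Od r))"
proof -
  have "card (V - {r}) = card ((V - {r}) \<inter> Ev r) + card ((V - {r}) \<inter> Od r)" by (rule card_split) simp
  moreover have "(V - {r}) \<inter> Ev r = Ev r" using Ev_sub by blast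
  moreover have "(V - {r}) \<inter> Od r = Od r" using Od_sub by blast
  moreover have "card (V - {r}) = card V - 1" using assms finV by simp
  moreover have "card V \<ge> 1" using assms finV card_0_eq[OF finV] by fastforce
  ultimately show ?thesis by simp
qed

lemma gam_ge1:
  assumes "card V \<ge> 2"
  shows "gam \<ge> 1"
proof (cases "Dl \<ge> 2")
  case True
  have "2 * real (card V) / (3 * real Dl) \<le> real (card V) / 3"
  proof -
    have "real (card V) * 2 \<le> real (card V) * real Dl" using True by (intro mult_left_mono) auto
    then show ?thesis using True by (simp add: field_simps)
  qed
  then show ?thesis by (simp add: gam_def)
next
  case False
  then have D1: "Dl = 1" using dl_pos assms by simp
  have "V \<noteq> {}" using assms by auto
  then obtain r where r: "r \<in> V" by blast
  have "card ((V - {r}) \<inter> Ev r) \<le> (Dl - 1) * card ((V - {r}) \<inter> Od r)"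
    by (rule count_i[OF r]) (use edgeV in auto)
  moreover have "(V - {r}) \<inter> Ev r = Ev r" using Ev_sub by blast
  ultimately have e0: "card (Ev r) = 0" using D1 by simp
  have "card ((V - {r}) \<inter> Od r) \<le> card ((V - {r}) \<inter> Nb r) + (Dl - 1) * card ((V - {r}) \<inter> Ev r)"
    by (rule count_ii[OF r]) (use edgeV in auto)
  moreover have "card ((V - {r}) \<inter> Nb r) \<le> card (Nb r)" using finV by (intro card_mono) (auto simp: Nb_def)
  ultimately have "card ((V - {r}) \<inter> Od r) \<le> 1" using D1 nb_card[of r] deg_le[OF r] by simp
  moreover have "(V - {r}) \<inter> Od r = Od r" using Od_sub by blast
  ultimately have "card (Od r) \<le> 1" by simp
  then have "real (card V) \<le> 2" using cardV_split[OF r] e0 by simp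
  then show ?thesis using D1 by (simp add: gam_def)
qed

lemma bound_alg:
  fixes D x y m :: real
  assumes D: "D \<ge> 1" and i: "x \<le> (D - 1) * y" and ii: "y \<le> m + (D - 1) * x" and m: "m \<ge> 0"
  shows "\<bar>x - y\<bar> \<le> (1 - 2 / D) * (x + y) + 2 * m / D"
proof -
  have "D * \<bar>x - y\<bar> \<le> (D - 2) * (x + y) + 2 * m"
  proof (cases "x \<ge> y")
    case True
    then have a: "\<bar>x - y\<bar> = x - y" by simp
    have b: "(D - 2) * (x + y) + 2 * m - D * (x - y) = 2 * ((D - 1) * y - x) + 2 * m" by (simp add: algebra_simps)
    have "0 \<le> 2 * ((D - 1) * y - x) + 2 * m" using i m by simp
    then show ?thesis unfolding a using b by simp
  next
    case False
    then have a: "\<bar>x - y\<bar> = y - x" by simp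
    have b: "(D - 2) * (x + y) + 2 * m - D * (y - x) = 2 * (m + (D - 1) * x - y)" by (simp add: algebra_simps)
    have "0 \<le> 2 * (m + (D - 1) * x - y)" using ii by simp
    then show ?thesis unfolding a using b by simp
  qed
  moreover have "(1 - 2 / D) * (x + y) + 2 * m / D = ((D - 2) * (x + y) + 2 * m) / D"
    using D by (simp add: field_simps)
  ultimately show ?thesis using D by (simp add: field_simps)
qed

lemma comp_bound:
  assumes r: "r \<in> V" and B: "B \<in> comps r" and D: "Dl \<ge> 1"
  shows "tt r B \<le> (1 - 2 / real Dl) * (ev r B + od r B) + 2 * real (card (B \<inter> Nb r)) / real Dl"
proof -
  have BV: "B \<subseteq> V - {r}" using comps_sub[OF B] .
  have cl: "\<And>y p. y \<in> B \<Longrightarrow> E p y \<Longrightarrow> p \<noteq> r \<Longrightarrow> p \<in> B" using comp_closed[OF B] by blast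
  have 1: "card (B \<inter> Ev r) \<le> (Dl - 1) * card (B \<inter> Od r)" by (rule count_i[OF r BV cl])
  have 2: "card (B \<inter> Od r) \<le> card (B \<inter> Nb r) + (Dl - 1) * card (B \<inter> Ev r)" by (rule count_ii[OF r BV cl])
  have rD: "real (Dl - 1) = real Dl - 1" using D by simp
  have h1: "ev r B \<le> (real Dl - 1) * od r B"
  proof -
    have "real (card (B \<inter> Ev r)) \<le> real ((Dl - 1) * card (B \<inter> Od r))" using 1 by (simp only: of_nat_le_iff)
    then show ?thesis unfolding ev_def od_def rD[symmetric] by simp
  qed
  have h2: "od r B \<le> real (card (B \<inter> Nb r)) + (real Dl - 1) * ev r B"
  proof -
    have "real (card (B \<inter> Od r)) \<le> real (card (B \<inter> Nb r) + (Dl - 1) * card (B \<inter> Ev r))" using 2 by (simp only: of_nat_le_iff)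
    then show ?thesis unfolding ev_def od_def rD[symmetric] by simp
  qed
  show ?thesis unfolding tt_def by (rule bound_alg) (use D h1 h2 in auto)
qed

end

context tr begin

lemma card_ge1:
  assumes "finite A" "a \<in> A" shows "card A \<ge> 1"
proof -
  have "A \<noteq> {}" using assms(2) by blast
  then have "0 < card A" using assms(1) by (simp add: card_gt_0_iff)
  then show ?thesis by simp
qed

lemma m_ge1:
  assumes r: "r \<in> V" and B: "B \<in> comps r"
  shows "card (B \<inter> Nb r) \<ge> 1"
proof -
  obtain u where u: "u \<in> B" "E r u" using comp_nbr[OF r B] by blast
  have "u \<in> B \<inter> Nb r" using u edgeV by (simp add: Nb_def)
  moreover have "finite (B \<inter> Nb r)" using comps_finB[OF B] by simp
  ultimately show ?thesis using card_ge1[of "B \<inter> Nb r" u] by simp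
qed

lemma three_bad:
  assumes r: "r \<in> V" and n2: "card V \<ge> 2"
    and B: "B1 \<in> comps r" "B2 \<in> comps r" "B3 \<in> comps r"
    and d: "B1 \<noteq> B2" "B2 \<noteq> B3" "B1 \<noteq> B3"
    and t: "tt r B1 > gam" "tt r B2 > gam" "tt r B3 > gam"
  shows False
proof -
  have D1: "Dl \<ge> 1" using dl_pos n2 .
  define D where "D = real Dl"
  define c where "c = 1 - 2 / D"
  have f: "finite B1" "finite B2" "finite B3" using comps_finB B by auto
  have dj: "B1 \<inter> B2 = {}" "B2 \<inter> B3 = {}" "B1 \<inter> B3 = {}" using comps_disj B d by auto
  have cu: "card (B1 \<union> B2 \<union> B3) = card B1 + card B2 + card B3"
  proof -
    have "card (B1 \<union> B2) = card B1 + card B2" using f dj by (intro card_Un_disjoint) auto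
    moreover have "card ((B1 \<union> B2) \<union> B3) = card (B1 \<union> B2) + card B3" using f dj by (intro card_Un_disjoint) auto
    ultimately show ?thesis by simp
  qed
  have cm: "card ((B1 \<union> B2 \<union> B3) \<inter> Nb r) = card (B1 \<inter> Nb r) + card (B2 \<inter> Nb r) + card (B3 \<inter> Nb r)"
  proof -
    have e: "(B1 \<union> B2 \<union> B3) \<inter> Nb r = (B1 \<inter> Nb r) \<union> (B2 \<inter> Nb r) \<union> (B3 \<inter> Nb r)" by blast
    have "card ((B1 \<inter> Nb r) \<union> (B2 \<inter> Nb r)) = card (B1 \<inter> Nb r) + card (B2 \<inter> Nb r)" using f dj by (intro card_Un_disjoint) auto
    moreover have "card (((B1 \<inter> Nb r) \<union> (B2 \<inter> Nb r)) \<union> (B3 \<inter> Nb r)) = card ((B1 \<inter> Nb r) \<union> (B2 \<inter> Nb r)) + card (B3 \<inter> Nb r)"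
      using f dj by (intro card_Un_disjoint) auto
    ultimately show ?thesis unfolding e by simp
  qed
  have sub: "B1 \<union> B2 \<union> B3 \<subseteq> V - {r}" using comps_sub B by blast
  have "card (B1 \<union> B2 \<union> B3) \<le> card (V - {r})" using sub finV by (intro card_mono) auto
  also have "\<dots> = card V - 1" using r finV by simp
  finally have sU: "card B1 + card B2 + card B3 \<le> card V - 1" using cu by simp
  have "card ((B1 \<union> B2 \<union> B3) \<inter> Nb r) \<le> card (Nb r)" using finV by (intro card_mono) (auto simp: Nb_def)
  also have "\<dots> \<le> Dl" using nb_card[of r] deg_le[OF r] by simp
  finally have mU: "card (B1 \<inter> Nb r) + card (B2 \<inter> Nb r) + card (B3 \<inter> Nb r) \<le> Dl" using cm by simp
  have "card (B1 \<inter> Nb r) \<ge> 1" "card (B2 \<inter> Nb r) \<ge> 1" "card (B3 \<inter> Nb r) \<ge> 1" using m_ge1 r B by auto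
  then have D3: "D \<ge> 3" using mU by (simp add: D_def)
  have c0: "c \<ge> 0" using D3 by (simp add: c_def field_simps)
  have Dp: "D > 0" using D3 by simp
  have cs: "ev r B + od r B = real (card B)" if "B \<in> comps r" for B
  proof -
    have "card B = card (B \<inter> Ev r) + card (B \<inter> Od r)" by (rule card_split[OF comps_sub[OF that]])
    then show ?thesis by (simp add: ev_def od_def)
  qed
  have b: "\<And>B. B \<in> comps r \<Longrightarrow> tt r B \<le> c * real (card B) + 2 * real (card (B \<inter> Nb r)) / D"
    using comp_bound[OF r _ D1] cs by (simp add: c_def D_def)
  have "tt r B1 + tt r B2 + tt r B3 \<le> c * real (card B1 + card B2 + card B3)
      + 2 * real (card (B1 \<inter> Nb r) + card (B2 \<inter> Nb r) + card (B3 \<inter> Nb r)) / D"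
    using b[OF B(1)] b[OF B(2)] b[OF B(3)] by (simp add: algebra_simps add_divide_distrib)
  moreover have "c * real (card B1 + card B2 + card B3) \<le> c * (real (card V) - 1)"
  proof (rule mult_left_mono[OF _ c0])
    have "card V \<ge> 1" using n2 by simp
    then show "real (card B1 + card B2 + card B3) \<le> real (card V) - 1" using sU by linarith
  qed
  moreover have "2 * real (card (B1 \<inter> Nb r) + card (B2 \<inter> Nb r) + card (B3 \<inter> Nb r)) / D \<le> 2"
  proof -
    have "real (card (B1 \<inter> Nb r) + card (B2 \<inter> Nb r) + card (B3 \<inter> Nb r)) \<le> D"
      using mU by (simp add: D_def)
    then show ?thesis using Dp by (simp add: field_simps)
  qed
  ultimately have up: "tt r B1 + tt r B2 + tt r B3 \<le> c * real (card V) - c + 2" by (simp add: algebra_simps)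
  have "3 * gam = c * real (card V) + 6" using Dp by (simp add: gam_def c_def D_def field_simps)
  then show False using up t c0 by linarith
qed

end

context tr begin

lemma Ev_flip:
  assumes ru: "E r u"
  shows "Ev u = Od r - {u}"
proof -
  have "\<And>x. x \<in> V \<Longrightarrow> even (gdist E u x) \<longleftrightarrow> odd (gdist E r x)" using par_flip[OF ru] by auto
  then show ?thesis by (auto simp: Even_T_def Odd_T_def)
qed

lemma Od_flip:
  assumes ru: "E r u"
  shows "Od u = Ev r \<union> {r}"
proof -
  have rV: "r \<in> V" using edgeV ru by simp
  have "\<And>x. x \<in> V \<Longrightarrow> odd (gdist E u x) \<longleftrightarrow> even (gdist E r x)" using par_flip[OF ru] by auto
  moreover have "even (gdist E r r)" using gd_self by simp
  ultimately show ?thesis using rV by (auto simp: Even_T_def Odd_T_def)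
qed

lemma u_Od:
  assumes ru: "E r u" shows "u \<in> Od r"
proof -
  have uV: "u \<in> V" using edgeV ru by simp
  have "odd (gdist E u u) \<longleftrightarrow> even (gdist E r u)" using par_flip[OF ru uV] .
  then show ?thesis using gd_self uV by (auto simp: Odd_T_def)
qed

lemma DR:
  assumes ru: "E r u"
  shows "cls (V - {u}) r = V - cls (V - {r}) u"
proof
  show "cls (V - {u}) r \<subseteq> V - cls (V - {r}) u"
  proof
    fix x assume x: "x \<in> cls (V - {u}) r"
    then have "x \<in> V" using cls_sub by blast
    moreover have "x \<notin> cls (V - {r}) u" using T1_disj[OF ru _ x] by blast
    ultimately show "x \<in> V - cls (V - {r}) u" by simp
  qed
  show "V - cls (V - {r}) u \<subseteq> cls (V - {u}) r"
  proof
    fix x assume x: "x \<in> V - cls (V - {r}) u"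
    then show "x \<in> cls (V - {u}) r" using T1_un[OF ru] by blast
  qed
qed

definition "Sd r D = (\<Sum>B\<in>comps r - {D}. tt r B)"

lemma sum_ev: "(\<Sum>B\<in>comps r. ev r B) = real (card (Ev r))"
proof -
  have "(\<Sum>B\<in>comps r. card (B \<inter> Ev r)) = card (Ev r)" by (rule sum_comps[OF Ev_sub])
  then show ?thesis unfolding ev_def by (metis of_nat_sum)
qed

lemma sum_od: "(\<Sum>B\<in>comps r. od r B) = real (card (Od r))"
proof -
  have "(\<Sum>B\<in>comps r. card (B \<inter> Od r)) = card (Od r)" by (rule sum_comps[OF Od_sub])
  then show ?thesis unfolding od_def by (metis of_nat_sum)
qed

lemma Sd_ge:
  assumes D: "D \<in> comps r"
  shows "Sd r D \<ge> \<bar>(real (card (Ev r)) - real (card (Od r))) - (ev r D - od r D)\<bar>"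
proof -
  have f: "finite (comps r)" by (rule comps_fin)
  have "(\<Sum>B\<in>comps r. ev r B - od r B) = (ev r D - od r D) + (\<Sum>B\<in>comps r - {D}. ev r B - od r B)"
    using sum.remove[OF f D] .
  moreover have "(\<Sum>B\<in>comps r. ev r B - od r B) = real (card (Ev r)) - real (card (Od r))"
    using sum_ev sum_od by (simp add: sum_subtractf)
  ultimately have e: "(\<Sum>B\<in>comps r - {D}. ev r B - od r B) = (real (card (Ev r)) - real (card (Od r))) - (ev r D - od r D)"
    by simp
  have "\<bar>\<Sum>B\<in>comps r - {D}. ev r B - od r B\<bar> \<le> (\<Sum>B\<in>comps r - {D}. \<bar>ev r B - od r B\<bar>)"
    by (rule sum_abs)
  then show ?thesis unfolding e Sd_def tt_def .
qed

lemma no_return: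
  assumes ru: "E r u" and g1: "gam \<ge> 1"
    and dr: "tt r (cls (V - {r}) u) > gam + Sd r (cls (V - {r}) u)"
    and du: "tt u (cls (V - {u}) r) > gam + Sd u (cls (V - {u}) r)"
  shows False
proof -
  define D where "D = cls (V - {r}) u"
  define R where "R = cls (V - {u}) r"
  have rV: "r \<in> V" and uV: "u \<in> V" using edgeV ru by auto
  have ru': "r \<noteq> u" using ru eirr by blast
  have Dc: "D \<in> comps r" using uV ru' by (simp add: D_def comps_def')
  have Rc: "R \<in> comps u" using rV ru' by (simp add: R_def comps_def')
  have RD: "R = V - D" unfolding R_def D_def by (rule DR[OF ru])
  have uD: "u \<in> D" unfolding D_def using uV ru' by (intro cls_self) simp
  have rD: "r \<notin> D" unfolding D_def using cls_sub by blast
  have fD: "finite D" using comps_finB[OF Dc] .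
  have fEv: "finite (Ev r)" "finite (Od r)" using finV by (auto simp: Even_T_def Odd_T_def)
  define Er where "Er = real (card (Ev r))"
  define Or where "Or = real (card (Od r))"
  define a where "a = ev r D - od r D"
  have uO: "u \<in> Od r" by (rule u_Od[OF ru])
  have rE: "r \<notin> Ev r" by (simp add: Even_T_def)
  have Eu: "real (card (Ev u)) = Or - 1"
  proof -
    have "card (Od r - {u}) = card (Od r) - 1" using uO fEv by simp
    moreover have "card (Od r) \<ge> 1" using card_ge1[OF fEv(2) uO] .
    ultimately show ?thesis unfolding Ev_flip[OF ru] Or_def by simp
  qed
  have Ou: "real (card (Od u)) = Er + 1"
  proof -
    have "card (Ev r \<union> {r}) = card (Ev r) + 1" using rE fEv by simp
    then show ?thesis unfolding Od_flip[OF ru] Er_def by simp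
  qed
  have evR: "ev u R = Or - od r D"
  proof -
    have "R \<inter> Ev u = Od r - D" unfolding RD Ev_flip[OF ru] using uD Od_sub by blast
    moreover have "card (Od r - D) = card (Od r) - card (Od r \<inter> D)" using fEv by (simp add: card_Diff_subset_Int)
    moreover have "card (Od r \<inter> D) \<le> card (Od r)" using fEv by (intro card_mono) auto
    moreover have "Od r \<inter> D = D \<inter> Od r" by blast
    ultimately show ?thesis unfolding ev_def od_def Or_def by simp
  qed
  have odR: "od u R = Er + 1 - ev r D"
  proof -
    have "R \<inter> Od u = insert r (Ev r - D)" unfolding RD Od_flip[OF ru] using rV rD Ev_sub by blast
    moreover have "card (insert r (Ev r - D)) = card (Ev r - D) + 1" using rE fEv by simp
    moreover have "card (Ev r - D) = card (Ev r) - card (Ev r \<inter> D)" using fEv by (simp add: card_Diff_subset_Int)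
    moreover have "card (Ev r \<inter> D) \<le> card (Ev r)" using fEv by (intro card_mono) auto
    moreover have "Ev r \<inter> D = D \<inter> Ev r" by blast
    ultimately show ?thesis unfolding ev_def od_def Er_def by simp
  qed
  have h1: "\<bar>a\<bar> > gam + \<bar>(Er - Or) - a\<bar>"
    using dr Sd_ge[OF Dc] unfolding D_def[symmetric] a_def Er_def Or_def tt_def by linarith
  have h2: "\<bar>a + Or - Er - 1\<bar> > gam + \<bar>a + 1\<bar>"
  proof -
    have "tt u R = \<bar>a + Or - Er - 1\<bar>" unfolding tt_def evR odR a_def by (simp add: algebra_simps)
    moreover have "Sd u R \<ge> \<bar>a + 1\<bar>"
    proof -
      have "Sd u R \<ge> \<bar>(real (card (Ev u)) - real (card (Od u))) - (ev u R - od u R)\<bar>" by (rule Sd_ge[OF Rc])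
      moreover have "(real (card (Ev u)) - real (card (Od u))) - (ev u R - od u R) = - (a + 1)"
        unfolding Eu Ou evR odR a_def by (simp add: algebra_simps)
      ultimately show ?thesis by simp
    qed
    ultimately show ?thesis using du unfolding R_def[symmetric] by linarith
  qed
  show False using h1 h2 g1 by (smt (verit))
qed

end

context tr begin

lemma exists_nondom:
  assumes n2: "card V \<ge> 2"
  shows "\<exists>r\<in>V. \<forall>D\<in>comps r. tt r D \<le> gam + Sd r D"
proof (rule ccontr)
  assume "\<not> ?thesis"
  then have all: "\<forall>r\<in>V. \<exists>D\<in>comps r. tt r D > gam + Sd r D" by (auto simp: not_le)
  define P where "P k \<longleftrightarrow> (\<exists>r\<in>V. \<exists>D\<in>comps r. tt r D > gam + Sd r D \<and> card D = k)" for k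
  have "V \<noteq> {}" using n2 by auto
  then obtain r0 where "r0 \<in> V" by blast
  then obtain D0 where "D0 \<in> comps r0" "tt r0 D0 > gam + Sd r0 D0" using all by blast
  then have "\<exists>k. P k" unfolding P_def using \<open>r0 \<in> V\<close> by blast
  then obtain k where k: "P k" "\<forall>m<k. \<not> P m" using exists_least_iff[of P] by blast
  then obtain r D where r: "r \<in> V" and D: "D \<in> comps r" and dom: "tt r D > gam + Sd r D" and cD: "card D = k"
    unfolding P_def by blast
  obtain u where u: "u \<in> D" "E r u" using comp_nbr[OF r D] by blast
  have uV: "u \<in> V" using edgeV u(2) by simp
  have ru': "r \<noteq> u" using u(2) eirr by blast
  obtain x where x: "D = cls (V - {r}) x" using D by (auto simp: comps_def')
  have DD: "D = cls (V - {r}) u" using cls_eq[of u "V - {r}" x] u(1) x by simp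
  obtain D' where D': "D' \<in> comps u" "tt u D' > gam + Sd u D'" using all uV by blast
  define R where "R = cls (V - {u}) r"
  have Rc: "R \<in> comps u" using r ru' by (simp add: R_def comps_def')
  show False
  proof (cases "D' = R")
    case True
    have g1: "gam \<ge> 1" using gam_ge1[OF n2] .
    show False using no_return[OF u(2) g1] dom D' True unfolding DD R_def by simp
  next
    case False
    have "D' \<inter> R = {}" using comps_disj[OF D'(1) Rc False] .
    moreover have "D' \<subseteq> V - {u}" using comps_sub[OF D'(1)] .
    moreover have "R = V - D" unfolding R_def DD by (rule DR[OF u(2)])
    ultimately have "D' \<subseteq> D - {u}" by blast
    then have "D' \<subset> D" using u(1) by blast
    then have "card D' < card D" using psubset_card_mono comps_finB[OF D] by blast
    moreover have "P (card D')" unfolding P_def using uV D' by blast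
    ultimately show False using k(2) cD by blast
  qed
qed

lemma final:
  assumes n2: "card V \<ge> 2" and r: "r \<in> V" and nd: "\<forall>D\<in>comps r. tt r D \<le> gam + Sd r D"
  shows "\<exists>C1 C2. C1 \<union> C2 = components_minus V E r \<and> C1 \<inter> C2 = {} \<and>
     (\<forall>(Cj, Ck) \<in> {(C1, C2), (C2, C1)}.
        real (\<Sum>B\<in>Cj. card (B \<inter> Even_T V E r)) + real (\<Sum>B\<in>Ck. card (B \<inter> Odd_T V E r))
          \<le> (2/3 - 1 / (3 * real (max_degree V E))) * real (card V) + 1/2)"
proof -
  define I where "I = comps r"
  have fI: "finite I" unfolding I_def by (rule comps_fin)
  have g1: "gam \<ge> 1" using gam_ge1[OF n2] .
  have D1: "Dl \<ge> 1" using dl_pos[OF n2] .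
  have three: "\<forall>i\<in>I. \<forall>j\<in>I. \<forall>k\<in>I. i \<noteq> j \<and> j \<noteq> k \<and> i \<noteq> k \<longrightarrow> tt r i \<le> gam \<or> tt r j \<le> gam \<or> tt r k \<le> gam"
    unfolding I_def using three_bad[OF r n2] by (meson not_le)
  have ndI: "\<forall>j\<in>I. tt r j \<le> gam + sum (tt r) (I - {j})" using nd unfolding I_def Sd_def by blast
  obtain G where G: "G \<subseteq> I" "\<bar>sum (tt r) G - sum (tt r) (I - G)\<bar> \<le> gam"
    using balH[OF fI _ _ ndI three] g1 by (auto simp: tt_def)
  define C1 where "C1 = {B\<in>G. ev r B \<ge> od r B} \<union> {B\<in>I - G. ev r B < od r B}"
  define C2 where "C2 = I - C1"
  have C1I: "C1 \<subseteq> I" using G(1) by (auto simp: C1_def)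
  have fC: "finite C1" "finite C2" using fI C1I finite_subset by (auto simp: C2_def)
  define X where "X = (\<Sum>B\<in>C1. ev r B) + (\<Sum>B\<in>C2. od r B)"
  define Y where "Y = (\<Sum>B\<in>C2. ev r B) + (\<Sum>B\<in>C1. od r B)"
  have IC: "I = C1 \<union> C2" "C1 \<inter> C2 = {}" using C1I by (auto simp: C2_def)
  have sumI: "\<And>f. sum f I = sum f C1 + sum f C2" using IC fC by (simp add: sum.union_disjoint)
  have XY1: "X + Y = real (card (Ev r)) + real (card (Od r))"
    using sumI[of "ev r"] sumI[of "od r"] sum_ev[of r] sum_od[of r] unfolding X_def Y_def I_def by simp
  have nV: "real (card V) = 1 + real (card (Ev r)) + real (card (Od r))" by (rule cardV_split[OF r])
  define sg where "sg B = (if B \<in> C1 then ev r B - od r B else od r B - ev r B)" for B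
  have XY2: "X - Y = sum sg I"
  proof -
    have "sum sg I = sum sg C1 + sum sg C2" by (rule sumI)
    moreover have "sum sg C1 = (\<Sum>B\<in>C1. ev r B - od r B)" by (rule sum.cong) (auto simp: sg_def)
    moreover have "sum sg C2 = (\<Sum>B\<in>C2. od r B - ev r B)" by (rule sum.cong) (auto simp: sg_def C2_def)
    ultimately show ?thesis unfolding X_def Y_def by (simp add: sum_subtractf)
  qed
  have sgt: "sg B = (if B \<in> G then tt r B else - tt r B)" if "B \<in> I" for B
    using that G(1) by (auto simp: sg_def tt_def C1_def)
  have "sum sg I = sum (tt r) G - sum (tt r) (I - G)"
  proof -
    have "sum sg I = (\<Sum>B\<in>I. if B \<in> G then tt r B else - tt r B)" by (rule sum.cong) (auto simp: sgt)
    also have "\<dots> = sum (tt r) (I \<inter> G) + sum (\<lambda>B. - tt r B) (I - G)"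
      using fI by (simp add: sum.If_cases Diff_eq)
    also have "I \<inter> G = G" using G(1) by blast
    finally show ?thesis by (simp add: sum_negf)
  qed
  then have XYd: "\<bar>X - Y\<bar> \<le> gam" using XY2 G(2) by simp
  define D where "D = real Dl"
  have Dp: "D > 0" using D1 by (simp add: D_def)
  define bb where "bb = (2/3 - 1 / (3 * D)) * real (card V) + 1/2"
  have beta: "bb = (real (card V) - 1 + gam) / 2"
    using Dp unfolding bb_def by (simp add: gam_def D_def[symmetric] field_simps)
  have a: "X - Y \<le> gam" "Y - X \<le> gam" using XYd by (simp_all add: abs_le_iff)
  have "2 * X \<le> real (card V) - 1 + gam" using a XY1 nV by linarith
  then have Xb: "X \<le> bb" unfolding beta by simp
  have "2 * Y \<le> real (card V) - 1 + gam" using a XY1 nV by linarith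
  then have Yb: "Y \<le> bb" unfolding beta by simp
  have X': "real (\<Sum>B\<in>C1. card (B \<inter> Ev r)) + real (\<Sum>B\<in>C2. card (B \<inter> Od r)) = X"
    unfolding X_def ev_def od_def by simp
  have Y': "real (\<Sum>B\<in>C2. card (B \<inter> Ev r)) + real (\<Sum>B\<in>C1. card (B \<inter> Od r)) = Y"
    unfolding Y_def ev_def od_def by simp
  show ?thesis
  proof (intro exI conjI)
    show "C1 \<union> C2 = comps r" using IC I_def by simp
    show "C1 \<inter> C2 = {}" using IC by simp
    show "\<forall>(Cj, Ck) \<in> {(C1, C2), (C2, C1)}.
        real (\<Sum>B\<in>Cj. card (B \<inter> Even_T V E r)) + real (\<Sum>B\<in>Ck. card (B \<inter> Odd_T V E r))
          \<le> (2/3 - 1 / (3 * real (max_degree V E))) * real (card V) + 1/2"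
      using X' Y' Xb Yb unfolding bb_def D_def by auto
  qed
qed

end

theorem lemma7p3:
  fixes V :: "'a set" and E :: "'a \<Rightarrow> 'a \<Rightarrow> bool"
  assumes "is_tree V E" and "card V \<ge> 2"
  shows "\<exists>r\<in>V. \<exists>C1 C2. C1 \<union> C2 = components_minus V E r \<and> C1 \<inter> C2 = {} \<and>
     (\<forall>(Cj, Ck) \<in> {(C1, C2), (C2, C1)}.
        real (\<Sum>B\<in>Cj. card (B \<inter> Even_T V E r)) + real (\<Sum>B\<in>Ck. card (B \<inter> Odd_T V E r))
          \<le> (2/3 - 1 / (3 * real (max_degree V E))) * real (card V) + 1/2)"
proof -
  interpret tr V E by (rule tr.intro) (rule assms(1))
  obtain r where r: "r \<in> V" "\<forall>D\<in>components_minus V E r. tt r D \<le> gam + Sd r D"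
    using exists_nondom[OF assms(2)] by blast
  show ?thesis using final[OF assms(2) r(1) r(2)] r(1) by blast
qed

end
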